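(* Let $\mathbb{F}_q$ be a finite field of characteristic $p\ge3$. For every $u\in\mathbb{F}_q\setminus\{0,1\}$, $$\#\mathcal{I}_{\mathrm{L},u}=\begin{cases}1,& u=-1 \text{ and } p=3,\\ 3,& u\in\{-1,2,2^{-1}\},\ q\equiv1,3,7\pmod 8,\ p>3,\\ 2,& u\in\{-1,2\},\ q\equiv5\pmod8,\\ 1,& u=2^{-1},\ q\equiv5\pmod8,\\ 2,& u^2-u+1=0,\ q\equiv1\pmod{12},\ p>3,\\ 1,& u^2-u+1=0,\ q\not\equiv1\pmod{12},\\ 3,& \chi_2(-1)=-1 \text{ and } u\notin\mathcal{B},\\ 2,& \chi_2(-1)=1,\ \chi_2(u)=\chi_2(1-u)=-1,\ u\notin\mathcal{B},\\ 4,& \chi_2(-1)=1,\ \chi_2(u)\chi_2(1-u)=-1,\ u\notin\mathcal{B},\\ 6,& \chi_2(-1)=1,\ \chi_2(u)=\chi_2(1-u)=1,\ u\notin\mathcal{B}.\end{cases}$$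
   Context: For $u\in\mathbb{F}_q\setminus\{0,1\}$, $E_{\mathrm{L},u}$ is the Legendre curve $Y^2=X(X-1)(X-u)$. Two elliptic curves in Weierstrass form are $\mathbb{F}_q$-isomorphic ($\cong_{\mathbb{F}_q}$) if one is transformed into the other by $X\mapsto\alpha^2\tilde X+\beta$, $Y\mapsto\alpha^3\tilde Y+\alpha^2\gamma\tilde X+\delta$ with $\alpha,\beta,\gamma,\delta\in\mathbb{F}_q$, $\alpha\ne0$. Define $\mathcal{I}_{\mathrm{L},u}=\{v\in\mathbb{F}_q\setminus\{0,1\}: E_{\mathrm{L},u}\cong_{\mathbb{F}_q}E_{\mathrm{L},v}\}$. Let $\mathcal{B}=\{u\in\mathbb{F}_q : (u^2-u+1)(u+1)(u-2)(2u-1)=0\}$. $\chi_2$ is the quadratic character of $\mathbb{F}_q$ ($\chi_2(w)=1$ if $w\ne0$ is a square, $-1$ if $w$ is a nonsquare). *)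

theory Defs
  imports "HOL-Computational_Algebra.Polynomial" "HOL-Library.Cardinality"
begin

text \<open>Bivariate polynomials over a ring are represented as 'a poly poly:
  the outer variable is Y, the inner variable is X.\<close>

definition varX :: "'a::comm_ring_1 poly poly" where
  "varX = [:[:0, 1:]:]"

definition varY :: "'a::comm_ring_1 poly poly" where
  "varY = [:0, 1:]"

definition cst :: "'a::comm_ring_1 \<Rightarrow> 'a poly poly" where
  "cst c = [:[:c:]:]"

text \<open>A Weierstrass curve Y^2 + a1 X Y + a3 Y = X^3 + a2 X^2 + a4 X + a6 is given
  by its coefficient tuple (a1, a2, a3, a4, a6).\<close>

type_synonym 'a weierstrass = "'a \<times> 'a \<times> 'a \<times> 'a \<times> 'a"

fun weier_eval :: "'a::comm_ring_1 weierstrass \<Rightarrow> 'a poly poly \<Rightarrow> 'a poly poly \<Rightarrow> 'a poly poly" where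
  "weier_eval (a1, a2, a3, a4, a6) X Y =
     Y ^ 2 + cst a1 * X * Y + cst a3 * Y - X ^ 3 - cst a2 * X ^ 2 - cst a4 * X - cst a6"

text \<open>E is transformed into E' by X \<mapsto> \<alpha>^2 X + \<beta>, Y \<mapsto> \<alpha>^3 Y + \<alpha>^2 \<gamma> X + \<delta>:
  substituting into the equation of E gives (\<alpha>^6 times) the equation of E'.\<close>
definition weier_iso :: "'a::field weierstrass \<Rightarrow> 'a weierstrass \<Rightarrow> bool" where
  "weier_iso E E' \<longleftrightarrow> (\<exists>\<alpha> \<beta> \<gamma> \<delta>. \<alpha> \<noteq> 0 \<and>
      weier_eval E (cst (\<alpha>^2) * varX + cst \<beta>)
                   (cst (\<alpha>^3) * varY + cst (\<alpha>^2 * \<gamma>) * varX + cst \<delta>)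
      = cst (\<alpha>^6) * weier_eval E' varX varY)"

text \<open>Legendre curve Y^2 = X(X-1)(X-u) = X^3 - (1+u) X^2 + u X.\<close>
definition legendre :: "'a::comm_ring_1 \<Rightarrow> 'a weierstrass" where
  "legendre u = (0, - (1 + u), 0, u, 0)"

definition iso_set_L :: "'a::field \<Rightarrow> 'a set" where
  "iso_set_L u = {v. v \<noteq> 0 \<and> v \<noteq> 1 \<and> weier_iso (legendre u) (legendre v)}"

definition badset :: "'a::field set" where
  "badset = {u. (u^2 - u + 1) * (u + 1) * (u - 2) * (2 * u - 1) = 0}"

definition chi2 :: "'a::field \<Rightarrow> int" where
  "chi2 w = (if w = 0 then 0 else if (\<exists>y. y ^ 2 = w) then 1 else -1)"

end

theory Submission
  imports Defs "HOL-Computational_Algebra.Polynomial"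
begin


definition sq :: "'a::field \<Rightarrow> bool" where "sq w \<longleftrightarrow> (\<exists>y. y^2 = w)"

lemma pow4: "(x::'a::comm_monoid_mult)^4 = (x^2)^2" by (simp add: power_mult[symmetric])

lemma fermat:
  fixes x :: "'a::{field,finite}"
  assumes "x \<noteq> 0"
  shows "x ^ (CARD('a) - 1) = 1"
proof -
  define N where "N = (UNIV :: 'a set) - {0}"
  have fin: "finite N" by simp
  have cN: "card N = CARD('a) - 1" unfolding N_def by (simp add: card_Diff_singleton)
  have bij: "bij_betw ((*) x) N N"
  proof (rule bij_betw_imageI)
    show "inj_on ((*) x) N" using assms by (auto simp: inj_on_def)
    show "(*) x ` N = N"
    proof
      show "(*) x ` N \<subseteq> N" using assms by (auto simp: N_def)
      show "N \<subseteq> (*) x ` N"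
      proof
        fix y assume "y \<in> N"
        then have "y = x * (y / x)" "y / x \<in> N" using assms by (auto simp: N_def)
        then show "y \<in> (*) x ` N" by blast
      qed
    qed
  qed
  have "prod (\<lambda>y. x * y) N = prod id N"
    using prod.reindex_bij_betw[OF bij, of id] by simp
  moreover have "prod (\<lambda>y. x * y) N = x ^ card N * prod id N"
    by (simp add: prod.distrib)
  moreover have "prod id N \<noteq> 0" using fin by (simp add: N_def)
  ultimately have "x ^ card N = 1"
    by (metis mult_cancel_right1)
  then show ?thesis using cN by simp
qed

lemma two_ne0:
  assumes "CHAR('a::field) \<ge> 3"
  shows "(2::'a) \<noteq> 0"
proof
  assume "(2::'a) = 0"
  then have "of_nat 2 = (0::'a)" by simp
  then have "CHAR('a) dvd 2" by (simp only: of_nat_eq_0_iff_char_dvd)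
  then show False using assms by (auto dest: dvd_imp_le)
qed

lemma card_ge2: "CARD('a::{field,finite}) \<ge> 2"
proof -
  have "card {0,1::'a} \<le> CARD('a)" by (rule card_mono) simp_all
  then show ?thesis by simp
qed

lemma card_odd:
  assumes "CHAR('a::{field,finite}) \<ge> 3"
  shows "odd CARD('a)"
proof (rule ccontr)
  assume "\<not> odd CARD('a)"
  then have "odd (CARD('a) - 1)" using card_ge2[where 'a='a] by auto
  then have "(-1::'a) ^ (CARD('a) - 1) = -1" by simp
  moreover have "(-1::'a) ^ (CARD('a) - 1) = 1" by (rule fermat) simp
  ultimately have "(2::'a) = 0" by (metis add_eq_0_iff one_add_one)
  then show False using two_ne0[OF assms] by simp
qed

lemma euler:
  fixes w :: "'a::{field,finite}"
  assumes ch: "CHAR('a) \<ge> 3" and w: "w \<noteq> 0"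
  shows "sq w \<longleftrightarrow> w ^ ((CARD('a) - 1) div 2) = 1"
proof -
  define m where "m = (CARD('a) - 1) div 2"
  have qm: "CARD('a) - 1 = 2 * m" using card_odd[OF ch] unfolding m_def by presburger
  have m1: "m \<ge> 1" using card_ge2[where 'a='a] card_odd[OF ch] qm by presburger
  define S where "S = {w::'a. w \<noteq> 0 \<and> sq w}"
  define R where "R = {w::'a. w ^ m = 1}"
  have SR: "S \<subseteq> R"
  proof
    fix z assume "z \<in> S"
    then obtain y where y: "y^2 = z" "z \<noteq> 0" by (auto simp: S_def sq_def)
    then have "y \<noteq> 0" by auto
    then have "y ^ (2*m) = 1" using fermat[of y] qm by simp
    then show "z \<in> R" using y by (simp add: R_def power_mult)
  qed
  define p :: "'a poly" where "p = monom 1 m + [:-1:]"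
  have dp: "degree p = m" unfolding p_def using m1
    by (subst degree_add_eq_left) (auto simp: degree_monom_eq)
  have p0: "p \<noteq> 0" using dp m1 by auto
  have "R = {x. poly p x = 0}" by (auto simp: R_def p_def poly_monom)
  then have cR: "card R \<le> m" using card_poly_roots_bound[OF p0] dp by simp
  define f where "f s = (SOME y::'a. y^2 = s)" for s
  define T where "T = f ` S"
  have N: "UNIV - {0} \<subseteq> T \<union> uminus ` T"
  proof
    fix y :: 'a assume "y \<in> UNIV - {0}"
    then have yS: "y^2 \<in> S" by (auto simp: S_def sq_def)
    have "\<exists>z. z^2 = y^2" by blast
    then have "(f (y^2))^2 = y^2" unfolding f_def by (rule someI_ex)
    then have "f (y^2) = y \<or> f (y^2) = - y" by (simp add: power2_eq_iff)
    moreover have "f (y^2) \<in> T" using yS unfolding T_def by blast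
    ultimately show "y \<in> T \<union> uminus ` T"
      by (metis UnI1 UnI2 image_eqI minus_minus)
  qed
  have "2 * m = card (UNIV - {0::'a})" using qm by (simp add: card_Diff_singleton)
  also have "\<dots> \<le> card (T \<union> uminus ` T)" by (rule card_mono[OF _ N]) simp
  also have "\<dots> \<le> card T + card (uminus ` T)" by (rule card_Un_le)
  also have "\<dots> \<le> card S + card S" unfolding T_def
    by (intro add_mono card_image_le) (auto intro: card_image_le le_trans[OF card_image_le card_image_le])
  finally have "m \<le> card S" by simp
  then have "S = R" using SR cR by (intro card_seteq) simp_all
  then show ?thesis using w unfolding S_def R_def m_def by blast
qed

lemma euler_neg:
  fixes w :: "'a::{field,finite}"
  assumes ch: "CHAR('a) \<ge> 3" and w: "w \<noteq> 0"
  shows "\<not> sq w \<longleftrightarrow> w ^ ((CARD('a) - 1) div 2) = -1"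
proof -
  define m where "m = (CARD('a) - 1) div 2"
  have qm: "CARD('a) - 1 = 2 * m" using card_odd[OF ch] unfolding m_def by presburger
  have "(w^m)^2 = 1" using fermat[OF w] qm by (simp add: power_mult[symmetric] mult.commute)
  then have "w^m = 1 \<or> w^m = -1" by (simp add: power2_eq_1_iff)
  moreover have "(1::'a) \<noteq> -1" using two_ne0[OF ch] by (metis add_eq_0_iff one_add_one)
  ultimately show ?thesis using euler[OF ch w] unfolding m_def by auto
qed

lemma one_ne_neg1:
  assumes ch: "CHAR('a::field) \<ge> 3" shows "(1::'a) \<noteq> -1"
  using two_ne0[OF ch] by (metis add_eq_0_iff one_add_one)

lemma sq_one[simp]: "sq (1::'a::field)" unfolding sq_def by (rule exI[of _ 1]) simp

lemma sq_mult:
  fixes a b :: "'a::{field,finite}"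
  assumes ch: "CHAR('a) \<ge> 3" and a: "a \<noteq> 0" and b: "b \<noteq> 0"
  shows "sq (a*b) \<longleftrightarrow> (sq a \<longleftrightarrow> sq b)"
proof -
  define m where "m = (CARD('a) - 1) div 2"
  have ab: "a * b \<noteq> 0" using a b by simp
  have 1: "sq a \<longleftrightarrow> a^m = 1" "\<not> sq a \<longleftrightarrow> a^m = -1" using euler[OF ch a] euler_neg[OF ch a] m_def by auto
  have 2: "sq b \<longleftrightarrow> b^m = 1" "\<not> sq b \<longleftrightarrow> b^m = -1" using euler[OF ch b] euler_neg[OF ch b] m_def by auto
  have 3: "sq (a*b) \<longleftrightarrow> a^m * b^m = 1" using euler[OF ch ab] m_def by (simp add: power_mult_distrib)
  show ?thesis using 1 2 3 one_ne_neg1[OF ch]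
    by (cases "sq a"; cases "sq b") (auto simp: minus_equation_iff)
qed

lemma sq_inv: "sq (1/(a::'a::field)) \<longleftrightarrow> sq a"
proof
  assume "sq (1/a)" then obtain y where "y^2 = 1/a" unfolding sq_def by blast
  then have "(1/y)^2 = a" by (simp add: power_one_over)
  then show "sq a" unfolding sq_def by blast
next
  assume "sq a" then obtain y where "y^2 = a" unfolding sq_def by blast
  then have "(1/y)^2 = 1/a" by (simp add: power_one_over)
  then show "sq (1/a)" unfolding sq_def by blast
qed

lemma sq_neg1:
  assumes ch: "CHAR('a::{field,finite}) \<ge> 3"
  shows "sq (-1::'a) \<longleftrightarrow> CARD('a) mod 4 = 1"
proof -
  define m where "m = (CARD('a) - 1) div 2"
  have qm: "CARD('a) = 2 * m + 1" using card_odd[OF ch] unfolding m_def by presburger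
  have "sq (-1::'a) \<longleftrightarrow> (-1::'a)^m = 1" using euler[OF ch, of "-1"] m_def by simp
  also have "\<dots> \<longleftrightarrow> even m" using one_ne_neg1[OF ch] by (auto simp: minus_one_power_iff)
  also have "\<dots> \<longleftrightarrow> CARD('a) mod 4 = 1" using qm by presburger
  finally show ?thesis .
qed

lemma sq_two:
  assumes ch: "CHAR('a::{field,finite}) \<ge> 3" and i: "sq (-1::'a)"
  shows "sq (2::'a) \<longleftrightarrow> CARD('a) mod 8 = 1"
proof -
  define m where "m = (CARD('a) - 1) div 2"
  have qm: "CARD('a) = 2 * m + 1" using card_odd[OF ch] unfolding m_def by presburger
  obtain i :: 'a where i2: "i^2 = -1" using i unfolding sq_def by blast
  have n1: "(1::'a) \<noteq> -1" by (rule one_ne_neg1[OF ch])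
  have i0: "i \<noteq> 0" using i2 by auto
  have i1: "i \<noteq> 1" using i2 n1 by auto
  have im1: "i \<noteq> -1" using i2 n1 by auto
  have i4: "i^4 = 1" using i2 by (simp add: pow4)
  have "(1+i)^2 = 2 * i" using i2 by (simp add: power2_eq_square algebra_simps)
  then have "sq (2*i)" unfolding sq_def by metis
  then have "sq (2::'a) \<longleftrightarrow> sq i" using sq_mult[OF ch two_ne0[OF ch] i0] by simp
  also have "\<dots> \<longleftrightarrow> i^m = 1" using euler[OF ch i0] m_def by simp
  also have "i^m = i^(m mod 4)"
  proof -
    have "i^m = i^(4*(m div 4) + m mod 4)" by simp
    also have "\<dots> = (i^4)^(m div 4) * i^(m mod 4)" by (simp only: power_add power_mult)
    finally show ?thesis using i4 by simp
  qed
  also have "i^(m mod 4) = 1 \<longleftrightarrow> m mod 4 = 0"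
  proof -
    have "m mod 4 < 4" by simp
    then have "m mod 4 = 0 \<or> m mod 4 = 1 \<or> m mod 4 = 2 \<or> m mod 4 = 3" by linarith
    moreover have "i^3 \<noteq> 1"
    proof
      assume "i^3 = 1"
      then have "i * i^2 = 1" by (simp add: power2_eq_square power3_eq_cube mult.assoc)
      then have "-i = 1" using i2 by simp
      then show False using im1 by (simp add: minus_equation_iff)
    qed
    moreover have n1': "(-1::'a) \<noteq> 1" using n1 by metis
    ultimately show ?thesis using i1 i2 by (elim disjE) simp_all
  qed
  also have "\<dots> \<longleftrightarrow> CARD('a) mod 8 = 1" using qm by presburger
  finally show ?thesis .
qed

lemma sq_two_or:
  assumes ch: "CHAR('a::{field,finite}) \<ge> 3"
  shows "(sq (2::'a) \<or> sq (-2::'a)) \<longleftrightarrow> CARD('a) mod 8 \<noteq> 5"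
proof -
  have odd: "odd CARD('a)" by (rule card_odd[OF ch])
  have m2: "(-2::'a) = (-1) * 2" by simp
  have sm: "sq (-2::'a) \<longleftrightarrow> (sq (-1::'a) \<longleftrightarrow> sq (2::'a))"
    unfolding m2 by (rule sq_mult[OF ch]) (use two_ne0[OF ch] in auto)
  show ?thesis
  proof (cases "sq (-1::'a)")
    case True
    then have "CARD('a) mod 4 = 1" using sq_neg1[OF ch] by simp
    then have "CARD('a) mod 8 = 1 \<or> CARD('a) mod 8 = 5" by presburger
    then show ?thesis using sm True sq_two[OF ch True] by auto
  next
    case False
    then have "CARD('a) mod 4 \<noteq> 1" using sq_neg1[OF ch] by simp
    then have "CARD('a) mod 8 \<noteq> 5" by presburger
    then show ?thesis using sm False by blast
  qed
qed



lemma weier_norm: "weier_eval (legendre u) (cst A * varX + cst b) (cst C * varY + cst D * varX + cst d) =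
  [:[:d * d - b * b * b + (1 + u) * (b * b) - u * b,
      2 * (D * d) - 3 * (A * (b * b)) + (1 + u) * (2 * (A * b)) - u * A,
      D * D - 3 * (A * (A * b)) + (1 + u) * (A * A), - (A * A * A):],
    [:2 * (C * d), 2 * (C * D):], [:C * C:]:]"
  by (simp add: legendre_def varX_def varY_def cst_def power2_eq_square power3_eq_cube algebra_simps)

lemma weier_norm2: "cst k * weier_eval (legendre v) varX varY =
  [:[:0, - k * v, k * (1 + v), - k:], [:0:], [:k:]:]"
  by (simp add: legendre_def varX_def varY_def cst_def power2_eq_square power3_eq_cube algebra_simps)

lemma iso_iff:
  fixes u v :: "'a::field"
  assumes two: "(2::'a) \<noteq> 0"
  shows "weier_iso (legendre u) (legendre v) \<longleftrightarrow>
    (\<exists>a b. a \<noteq> 0 \<and> b*(b-1)*(b-u) = 0 \<and> (1+u) - 3*b = a^2*(1+v) \<and> 3*b^2 - 2*(1+u)*b + u = a^4*v)"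
proof
  assume "weier_iso (legendre u) (legendre v)"
  then obtain a b g d where a: "a \<noteq> 0" and eq: "weier_eval (legendre u) (cst (a^2) * varX + cst b)
                   (cst (a^3) * varY + cst (a^2 * g) * varX + cst d)
      = cst (a^6) * weier_eval (legendre v) varX varY"
    unfolding weier_iso_def by blast
  note eq' = eq[unfolded weier_norm weier_norm2]
  from eq' have e1: "2 * (a^3 * d) = 0" and e2: "2 * (a^3 * (a^2*g)) = 0" by simp_all
  from e1 two a have d0: "d = 0" by simp
  from e2 two a have g0: "g = 0" by simp
  from eq' d0 g0 have c0: "- b * b * b + (1 + u) * (b * b) - u * b = 0"
    and c1: "- 3 * (a^2 * (b * b)) + (1 + u) * (2 * (a^2 * b)) - u * a^2 = -(a^6 * v)"
    and c2: "- 3 * (a^2 * (a^2 * b)) + (1 + u) * (a^2 * a^2) = a^6 * (1 + v)"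
    by simp_all
  have "b*(b-1)*(b-u) = 0" using c0 by (simp add: algebra_simps)
  moreover have "(1+u) - 3*b = a^2*(1+v)"
  proof -
    have "a^4 * ((1+u) - 3*b) = a^4 * (a^2*(1+v))" using c2 by (simp add: algebra_simps power_add[symmetric] eval_nat_numeral)
    moreover have "a^4 \<noteq> 0" using a by simp
    ultimately show ?thesis using mult_left_cancel by blast
  qed
  moreover have "3*b^2 - 2*(1+u)*b + u = a^4*v"
  proof -
    have "a^2 * (3*b^2 - 2*(1+u)*b + u) = a^2 * (a^4*v)" using c1 by (simp add: algebra_simps power_add[symmetric] eval_nat_numeral)
    moreover have "a^2 \<noteq> 0" using a by simp
    ultimately show ?thesis using mult_left_cancel by blast
  qed
  ultimately show "\<exists>a b. a \<noteq> 0 \<and> b*(b-1)*(b-u) = 0 \<and> (1+u) - 3*b = a^2*(1+v) \<and> 3*b^2 - 2*(1+u)*b + u = a^4*v"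
    using a by blast
next
  assume "\<exists>a b. a \<noteq> 0 \<and> b*(b-1)*(b-u) = 0 \<and> (1+u) - 3*b = a^2*(1+v) \<and> 3*b^2 - 2*(1+u)*b + u = a^4*v"
  then obtain a b where a: "a \<noteq> 0" and h0: "b*(b-1)*(b-u) = 0" and h1: "(1+u) - 3*b = a^2*(1+v)"
    and h2: "3*b^2 - 2*(1+u)*b + u = a^4*v" by blast
  have "weier_eval (legendre u) (cst (a^2) * varX + cst b)
                   (cst (a^3) * varY + cst (a^2 * 0) * varX + cst 0)
      = cst (a^6) * weier_eval (legendre v) varX varY"
    unfolding weier_norm weier_norm2
    apply (simp add: eval_nat_numeral) apply (intro conjI) subgoal using h0 by algebra subgoal using h2 by algebra subgoal using h1 by algebra done
  then show "weier_iso (legendre u) (legendre v)" unfolding weier_iso_def using a by blast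
qed

lemma iso_vals:
  fixes u v :: "'a::field"
  assumes two: "(2::'a) \<noteq> 0" and u0: "u \<noteq> 0" and u1: "u \<noteq> 1"
  shows "weier_iso (legendre u) (legendre v) \<longleftrightarrow>
    (v = u \<or> (v = 1/u \<and> sq u) \<or> (v = 1-u \<and> sq (-1::'a)) \<or> (v = 1/(1-u) \<and> sq (u-1))
     \<or> (v = (u-1)/u \<and> sq (-u)) \<or> (v = u/(u-1) \<and> sq (1-u)))"
proof
  assume "weier_iso (legendre u) (legendre v)"
  then obtain a b where a: "a \<noteq> 0" and h0: "b*(b-1)*(b-u) = 0" and h1: "(1+u) - 3*b = a^2*(1+v)"
    and h2: "3*b^2 - 2*(1+u)*b + u = a^4*v" using iso_iff[OF two] by blast
  have u1': "u - 1 \<noteq> 0" "1 - u \<noteq> 0" using u1 by auto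
  from h0 have "b = 0 \<or> b = 1 \<or> b = u" by auto
  then show "v = u \<or> (v = 1/u \<and> sq u) \<or> (v = 1-u \<and> sq (-1::'a)) \<or> (v = 1/(1-u) \<and> sq (u-1))
     \<or> (v = (u-1)/u \<and> sq (-u)) \<or> (v = u/(u-1) \<and> sq (1-u))"
  proof (elim disjE)
    assume b: "b = 0"
    have "(a^2 - 1) * (a^2 - u) = 0" using h1 h2 b by algebra
    then have "a^2 = 1 \<or> a^2 = u" by auto
    then show ?thesis
    proof
      assume "a^2 = 1" then have "v = u" using h2 b by algebra
      then show ?thesis by simp
    next
      assume au: "a^2 = u"
      have e: "u = a^4 * v" using h2 b by simp
      have "a^4 = (a^2)^2" by (simp add: power_mult[symmetric])
      then have "u = u^2 * v" using e au by simp
      then have "u * (u*v - 1) = 0" by (simp add: algebra_simps power2_eq_square)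
      then have "u * v = 1" using u0 by simp
      then have "v = 1/u" using u0 by (simp add: field_simps)
      moreover have "sq u" unfolding sq_def by (rule exI[of _ a]) (rule au)
      ultimately show ?thesis by simp
    qed
  next
    assume b: "b = 1"
    have "(a^2 + 1) * (a^2 - (u - 1)) = 0" using h1 h2 b by algebra
    then have "a^2 = -1 \<or> a^2 = u - 1" by (auto simp: add_eq_0_iff minus_equation_iff)
    then show ?thesis
    proof
      assume au: "a^2 = -1" then have "v = 1 - u" using h2 b by algebra
      moreover have "sq (-1::'a)" unfolding sq_def by (rule exI[of _ a]) (rule au)
      ultimately show ?thesis by simp
    next
      assume au: "a^2 = u - 1"
      then have "(u - 1) * ((u - 1)*v + 1) = 0" using h1 b by algebra
      then have "(u-1)*v = -1" using u1' by (simp add: add_eq_0_iff minus_equation_iff)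
      then have "v = 1/(1-u)" using u1' by (simp add: field_simps)
      moreover have "sq (u-1)" unfolding sq_def by (rule exI[of _ a]) (rule au)
      ultimately show ?thesis by simp
    qed
  next
    assume b: "b = u"
    have "(a^2 + u) * (a^2 - (1 - u)) = 0" using h1 h2 b by algebra
    then have "a^2 = -u \<or> a^2 = 1 - u" by (auto simp: add_eq_0_iff minus_equation_iff)
    then show ?thesis
    proof
      assume au: "a^2 = -u"
      then have "u * (u*v - (u - 1)) = 0" using h1 b by algebra
      then have "u*v = u - 1" using u0 by simp
      then have "v = (u-1)/u" using u0 by (simp add: field_simps)
      moreover have "sq (-u)" unfolding sq_def by (rule exI[of _ a]) (rule au)
      ultimately show ?thesis by simp
    next
      assume au: "a^2 = 1 - u"
      then have "(1 - u) * ((1-u)*v + u) = 0" using h1 b by algebra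
      then have "(1-u)*v = -u" using u1' by (simp add: add_eq_0_iff minus_equation_iff equation_minus_iff)
      then have "v = u/(u-1)" using u1' by (simp add: field_simps)
      moreover have "sq (1-u)" unfolding sq_def by (rule exI[of _ a]) (rule au)
      ultimately show ?thesis by simp
    qed
  qed
next
  have u1': "u - 1 \<noteq> 0" "1 - u \<noteq> 0" using u1 by auto
  assume "v = u \<or> (v = 1/u \<and> sq u) \<or> (v = 1-u \<and> sq (-1::'a)) \<or> (v = 1/(1-u) \<and> sq (u-1))
     \<or> (v = (u-1)/u \<and> sq (-u)) \<or> (v = u/(u-1) \<and> sq (1-u))"
  then have "\<exists>a b. a \<noteq> 0 \<and> b*(b-1)*(b-u) = 0 \<and> (1+u) - 3*b = a^2*(1+v) \<and> 3*b^2 - 2*(1+u)*b + u = a^4*v"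
  proof (elim disjE conjE)
    assume "v = u" then show ?thesis by (intro exI[of _ 1] exI[of _ 0]) simp
  next
    assume v: "v = 1/u" and "sq u"
    then obtain y where y: "y^2 = u" unfolding sq_def by blast
    have vv: "u*v = 1" using v u0 u1' by (simp add: field_simps)
    have "y \<noteq> 0" using y u0 by auto
    moreover have "1+u = y^2*(1+v)" unfolding pow4 y using vv by algebra
    moreover have "u = y^4*v" unfolding pow4 y using vv by algebra
    ultimately show ?thesis apply - apply (rule exI[of _ y], rule exI[of _ 0]) by (simp add: algebra_simps power2_eq_square)
  next
    assume v: "v = 1-u" and "sq (-1::'a)"
    then obtain y :: 'a where y: "y^2 = -1" unfolding sq_def by blast
    have vv: "v = 1-u" using v u0 u1' by (simp add: field_simps)
    have "y \<noteq> 0" using y by auto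
    moreover have "u - 2 = y^2*(1+v)" unfolding pow4 y using vv by algebra
    moreover have "1 - u = y^4*v" unfolding pow4 y using vv by algebra
    ultimately show ?thesis apply - apply (rule exI[of _ y], rule exI[of _ 1]) by (simp add: algebra_simps power2_eq_square)
  next
    assume v: "v = 1/(1-u)" and "sq (u-1)"
    then obtain y where y: "y^2 = u-1" unfolding sq_def by blast
    have vv: "(1-u)*v = 1" using v u0 u1' by (simp add: field_simps)
    have "y \<noteq> 0" using y u1' by auto
    moreover have "u - 2 = y^2*(1+v)" unfolding pow4 y using vv by algebra
    moreover have "1 - u = y^4*v" unfolding pow4 y using vv by algebra
    ultimately show ?thesis apply - apply (rule exI[of _ y], rule exI[of _ 1]) by (simp add: algebra_simps power2_eq_square)
  next
    assume v: "v = (u-1)/u" and "sq (-u)"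
    then obtain y where y: "y^2 = -u" unfolding sq_def by blast
    have vv: "u*v = u-1" using v u0 u1' by (simp add: field_simps)
    have "y \<noteq> 0" using y u0 by auto
    moreover have "1 - 2*u = y^2*(1+v)" unfolding pow4 y using vv by algebra
    moreover have "u^2 - u = y^4*v" unfolding pow4 y using vv by algebra
    ultimately show ?thesis apply - apply (rule exI[of _ y], rule exI[of _ u]) apply (intro conjI) apply simp apply simp subgoal by algebra subgoal by algebra done
  next
    assume v: "v = u/(u-1)" and "sq (1-u)"
    then obtain y where y: "y^2 = 1-u" unfolding sq_def by blast
    have vv: "(u-1)*v = u" using v u0 u1' by (simp add: field_simps)
    have "y \<noteq> 0" using y u1' by auto
    moreover have "1 - 2*u = y^2*(1+v)" unfolding pow4 y using vv by (simp add: algebra_simps)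
    moreover have "u^2 - u = y^4*v"
    proof -
      have "y^4*v = (u-1)*((u-1)*v)" unfolding pow4 y by (simp add: power2_eq_square algebra_simps)
      also have "\<dots> = (u-1)*u" unfolding vv ..
      finally show ?thesis by (simp add: power2_eq_square algebra_simps)
    qed
    ultimately show ?thesis apply - apply (rule exI[of _ y], rule exI[of _ u]) apply (intro conjI) apply simp apply simp subgoal by algebra subgoal by algebra done
  qed
  then show "weier_iso (legendre u) (legendre v)" using iso_iff[OF two] by blast
qed


definition Lst :: "'a::field \<Rightarrow> ('a \<times> bool) list" where
  "Lst u = [(u, True), (1/u, sq u), (1-u, sq (-1::'a)), (1/(1-u), sq (u-1)), ((u-1)/u, sq (-u)), (u/(u-1), sq (1-u))]"

lemma iso_set_list:
  fixes u :: "'a::field"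
  assumes two: "(2::'a) \<noteq> 0" and u0: "u \<noteq> 0" and u1: "u \<noteq> 1"
  shows "iso_set_L u = set (map fst (filter snd (Lst u)))"
proof -
  have u1': "u - 1 \<noteq> 0" "1 - u \<noteq> 0" using u1 by auto
  have nz: "v \<noteq> 0 \<and> v \<noteq> 1" if "v = u \<or> (v = 1/u \<and> sq u) \<or> (v = 1-u \<and> sq (-1::'a)) \<or> (v = 1/(1-u) \<and> sq (u-1))
     \<or> (v = (u-1)/u \<and> sq (-u)) \<or> (v = u/(u-1) \<and> sq (1-u))" for v
    using that u0 u1 u1' by (auto simp: field_simps)
  show ?thesis
    unfolding iso_set_L_def iso_vals[OF two u0 u1] Lst_def
    using nz by auto
qed

lemma card_list:
  assumes "distinct (map fst L)"
  shows "card (set (map fst (filter snd L))) = length (filter snd L)"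
proof -
  have "distinct (map fst (filter snd L))" using assms by (simp add: distinct_map_filter)
  then have "card (set (map fst (filter snd L))) = length (map fst (filter snd L))" by (rule distinct_card)
  then show ?thesis by simp
qed

lemma three_ne0:
  assumes "CHAR('a::field) \<ge> 3" "CHAR('a) \<noteq> 3" shows "(3::'a) \<noteq> 0"
proof
  assume "(3::'a) = 0"
  then have "of_nat 3 = (0::'a)" by simp
  then have "CHAR('a) dvd 3" by (simp only: of_nat_eq_0_iff_char_dvd)
  then show False using assms by (auto dest: dvd_imp_le)
qed

lemma three_eq0:
  assumes "CHAR('a::field) = 3" shows "(3::'a) = 0"
proof -
  have "of_nat 3 = (0::'a)" by (simp only: of_nat_eq_0_iff_char_dvd assms) simp
  then show ?thesis by simp
qed

lemma case1:
  fixes u :: "'a::{field,finite}"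
  assumes ch: "CHAR('a) = 3" and u: "u = -1"
  shows "card (iso_set_L u) = 1"
proof -
  have ch3: "CHAR('a) \<ge> 3" using ch by simp
  have t0: "(3::'a) = 0" by (rule three_eq0[OF ch])
  have h2: "(2::'a) = -1"
  proof -
    have "(2::'a) + 1 = 3" by simp
    then have "(2::'a) + 1 = 0" using t0 by simp
    then show ?thesis by (simp add: eq_neg_iff_add_eq_0)
  qed
  have S: "iso_set_L u = set (map fst (filter snd (Lst u)))"
    by (rule iso_set_list) (use two_ne0[OF ch3] u in auto)
  have "iso_set_L u = {u}"
    unfolding S Lst_def using u h2 two_ne0[OF ch3] by auto
  then show ?thesis by simp
qed

lemma trio_ne:
  assumes ch: "CHAR('a::field) \<ge> 3" and t: "(3::'a) \<noteq> 0"
  shows "(-1::'a) \<noteq> 2" "(-1::'a) \<noteq> 1/2" "(2::'a) \<noteq> 1/2" "(2::'a) \<noteq> 1"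
proof -
  have two: "(2::'a) \<noteq> 0" by (rule two_ne0[OF ch])
  show "(-1::'a) \<noteq> 2"
  proof
    assume "(-1::'a) = 2" then have "(3::'a) = 0" by (simp add: eq_neg_iff_add_eq_0 equation_minus_iff)
    then show False using t by simp
  qed
  show "(-1::'a) \<noteq> 1/2"
  proof
    assume "(-1::'a) = 1/2" then have "(-2::'a) = 1" using two by (simp add: field_simps)
    then have "(3::'a) = 0" by (simp add: eq_neg_iff_add_eq_0 equation_minus_iff)
    then show False using t by simp
  qed
  show "(2::'a) \<noteq> 1/2"
  proof
    assume "(2::'a) = 1/2" then have "(4::'a) = 1" using two by (simp add: field_simps)
    then have "(3::'a) + 1 = 1" by simp
    then have "(3::'a) = 0" by (simp only: add_cancel_left_left)
    then show False using t by simp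
  qed
  show "(2::'a) \<noteq> 1"
  proof
    assume "(2::'a) = 1"
    then have "(1::'a) + 1 = 1 + 0" by simp
    then have "(1::'a) = 0" by (simp only: add_left_cancel)
    then show False by simp
  qed
qed

lemma Lst_set: fixes u :: "'a::field" shows "set (map fst (filter snd (Lst u))) =
  {u} \<union> (if sq u then {1/u} else {}) \<union> (if sq (-1::'a) then {1-u} else {}) \<union> (if sq (u-1) then {1/(1-u)} else {})
   \<union> (if sq (-u) then {(u-1)/u} else {}) \<union> (if sq (1-u) then {u/(u-1)} else {})"
  unfolding Lst_def by auto

lemma trio:
  fixes u :: "'a::{field,finite}"
  assumes ch: "CHAR('a) \<ge> 3" and t: "(3::'a) \<noteq> 0" and u: "u \<in> {-1, 2, inverse 2}"
  shows "iso_set_L u = (if sq (2::'a) \<or> sq (-2::'a) then {-1, 2, 1/2}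
           else if u = 1/2 then {1/2} else {-1, 2})"
proof -
  have two: "(2::'a) \<noteq> 0" by (rule two_ne0[OF ch])
  note ne = trio_ne[OF ch t]
  have u0: "u \<noteq> 0" "u \<noteq> 1" using u two ne by (auto simp: field_simps)
  have S: "iso_set_L u = set (map fst (filter snd (Lst u)))"
    by (rule iso_set_list) (use two u0 in auto)
  note S' = S[unfolded Lst_set]
  define h where "h = (1/2::'a)"
  have sqh: "sq (-h) \<longleftrightarrow> sq (-2::'a)" "sq h \<longleftrightarrow> sq (2::'a)"
    using sq_inv[of "-2::'a"] sq_inv[of "2::'a"] unfolding h_def by simp_all
  have ne': "(-1::'a) \<noteq> 2" "(-1::'a) \<noteq> h" "(2::'a) \<noteq> h" "(2::'a) \<noteq> -1" "h \<noteq> -1" "h \<noteq> 2"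
    using ne unfolding h_def by metis+
  have s1: "sq (1::'a)" by simp
  consider "u = -1" | "u = 2" | "u = h" using u unfolding h_def by (auto simp: inverse_eq_divide)
  then show ?thesis
  proof cases
    case 1
    have e: "1/(-1::'a) = -1" "1-(-1::'a) = 2" "1/(2::'a) = h" "(-1::'a)-1 = -2" "(-2::'a)/(-1) = 2" "(-1::'a)/(-2) = h"
      "-(-1::'a) = 1" using two unfolding h_def by (simp_all add: field_simps)
    show ?thesis unfolding S' unfolding 1 e
      by (cases "sq (2::'a)"; cases "sq (-2::'a)"; cases "sq(-1::'a)") (use ne' s1 in auto)
  next
    case 2
    have e: "1 - (2::'a) = -1" "1/(-1::'a) = -1" "(2::'a) - 1 = 1" "1/(2::'a) = h" "(2::'a)/1 = 2"
      using two unfolding h_def by (simp_all add: field_simps)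
    show ?thesis unfolding S' unfolding 2 e
      by (cases "sq (2::'a)"; cases "sq (-2::'a)"; cases "sq(-1::'a)") (use ne' s1 in auto)
  next
    case 3
    have e: "1/h = 2" "1 - h = h" "h - 1 = -h" "(-h)/h = -1" "h/(-h) = -1" "1/(2::'a) = h"
      using two unfolding h_def by (simp_all add: field_simps)
    show ?thesis unfolding S' unfolding 3 e sqh
      by (cases "sq (2::'a)"; cases "sq (-2::'a)"; cases "sq(-1::'a)") (use ne' s1 in auto)
  qed
qed

lemma hex_set:
  fixes u :: "'a::{field,finite}"
  assumes ch: "CHAR('a) \<ge> 3" and h: "u^2 - u + 1 = 0"
  shows "iso_set_L u = (if sq u \<or> sq (-1::'a) then {u, 1-u} else {u})"
proof -
  have two: "(2::'a) \<noteq> 0" by (rule two_ne0[OF ch])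
  have u2: "u*u = u - 1"
  proof -
    have "u*u - (u - 1) = u^2 - u + 1" by (simp add: power2_eq_square algebra_simps)
    then show ?thesis using h by simp
  qed
  have u0: "u \<noteq> 0" using h by auto
  have u1: "u \<noteq> 1" using h by auto
  have u1': "1 - u \<noteq> 0" "u - 1 \<noteq> 0" using u1 by auto
  have v1: "1/u = 1-u"
  proof -
    have "(1-u)*u = 1" using u2 by (simp add: algebra_simps)
    then show ?thesis using u0 by (simp add: field_simps)
  qed
  have v2: "1/(1-u) = u"
  proof -
    have "u*(1-u) = 1" using u2 by (simp add: algebra_simps)
    then show ?thesis using u1' by (simp add: field_simps)
  qed
  have v3: "(u-1)/u = u" using u2 u0 by (simp add: field_simps)
  have v4: "u/(u-1) = 1-u"
  proof -
    have "(1-u)*(u-1) = u" using u2 by (simp add: algebra_simps)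
    then show ?thesis using u1' by (simp add: field_simps)
  qed
  have s1: "sq (1-u) \<longleftrightarrow> sq u" using sq_inv[of u] v1 by simp
  have S: "iso_set_L u = set (map fst (filter snd (Lst u)))"
    by (rule iso_set_list) (use two u0 u1 in auto)
  show ?thesis unfolding S Lst_set unfolding v1 v2 v3 v4 s1
    by (cases "sq u"; cases "sq (-1::'a)"; cases "sq (u-1)"; cases "sq (-u)") auto
qed

lemma nat_aux1: "even (n::nat) \<Longrightarrow> n mod 6 = 0 \<or> n mod 6 = 2 \<or> n mod 6 = 4" by presburger
lemma nat_aux2: "odd (q::nat) \<Longrightarrow> (q - 1) mod 6 = 0 \<Longrightarrow> q mod 12 \<noteq> 1 \<Longrightarrow> odd ((q-1) div 6)" by presburger

lemma hex_nonsq: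
  fixes u :: "'a::{field,finite}"
  assumes ch: "CHAR('a) \<ge> 3" and t: "(3::'a) \<noteq> 0" and h: "u^2 - u + 1 = 0"
    and q: "CARD('a) mod 12 \<noteq> 1"
  shows "\<not> sq u \<and> \<not> sq (-1::'a)"
proof -
  have n1: "(1::'a) \<noteq> -1" by (rule one_ne_neg1[OF ch])
  have u2: "u*u = u - 1"
  proof -
    have "u*u - (u - 1) = u^2 - u + 1" by (simp add: power2_eq_square algebra_simps)
    then show ?thesis using h by simp
  qed
  have u0: "u \<noteq> 0" using h by auto
  have u3: "u^3 = -1"
  proof -
    have "u^3 = u * (u*u)" by (simp add: power3_eq_cube)
    also have "\<dots> = u*(u - 1)" unfolding u2 ..
    also have "\<dots> = u*u - u" by (simp add: algebra_simps)
    also have "\<dots> = (u - 1) - u" unfolding u2 ..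
    also have "\<dots> = -1" by simp
    finally show ?thesis .
  qed
  have u6: "u^6 = 1"
  proof -
    have "u^6 = (u^3)^2" by (simp flip: power_mult)
    then show ?thesis using u3 by simp
  qed
  define k where "k = (CARD('a) - 1) div 6"
  define r where "r = (CARD('a) - 1) mod 6"
  have odd: "odd CARD('a)" by (rule card_odd[OF ch])
  have qk: "CARD('a) - 1 = 6*k + r" unfolding k_def r_def by simp
  have "even (CARD('a) - 1)" using odd card_ge2[where 'a='a] by simp
  then have rev: "r = 0 \<or> r = 2 \<or> r = 4" unfolding r_def by (rule nat_aux1)
  have "u^(CARD('a) - 1) = 1" by (rule fermat[OF u0])
  then have "(u^6)^k * u^r = 1" unfolding qk by (simp only: power_add power_mult)
  then have ur: "u^r = 1" using u6 by simp
  have r0: "r = 0"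
  proof (rule ccontr)
    assume "r \<noteq> 0"
    then have "r = 2 \<or> r = 4" using rev by simp
    then show False
    proof
      assume "r = 2"
      then have "u*u = 1" using ur by (simp add: power2_eq_square)
      then have "u = 2" using u2 by (simp add: algebra_simps)
      then have "u^2 - u + 1 = 3" by (simp add: power2_eq_square)
      then show False using h t by simp
    next
      assume "r = 4"
      then have "u * u^3 = 1" using ur by (simp add: power_Suc[symmetric] del: power_Suc)
      then have "u = -1" using u3 by (simp add: minus_equation_iff)
      then have "u^2 - u + 1 = 3" by (simp add: power2_eq_square)
      then show False using h t by simp
    qed
  qed
  have kodd: "odd k" unfolding k_def by (rule nat_aux2[OF odd _ q]) (use r0 r_def in simp)
  define m where "m = (CARD('a) - 1) div 2"
  have m3: "m = 3*k" unfolding m_def using qk r0 by simp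
  have "(-1::'a)^m = -1" using kodd m3 by simp
  then have a: "\<not> sq (-1::'a)" using euler[OF ch, of "-1"] n1 unfolding m_def by auto
  have "u^m = -1" unfolding m3 power_mult u3 using kodd by simp
  then have "\<not> sq u" using euler[OF ch u0] n1 unfolding m_def by auto
  with a show ?thesis by blast
qed

lemma gen_distinct:
  fixes u :: "'a::field"
  assumes u0: "u \<noteq> 0" and u1: "u \<noteq> 1" and nb: "u \<notin> badset"
  shows "distinct (map fst (Lst u))"
proof -
  have nb': "(u^2-u+1)*(u+1)*(u-2)*(2*u-1) \<noteq> 0" using nb unfolding badset_def by simp
  then have f1: "u^2-u+1 \<noteq> 0" and f2: "u+1 \<noteq> 0" and f3: "u-2 \<noteq> 0" and f4: "2*u-1 \<noteq> 0" by auto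
  have f5: "u*(u-2) \<noteq> 0" using u0 f3 by simp
  have f6: "(u-1)*(u+1) \<noteq> 0" using u1 f2 by simp
  have l1: "u \<noteq> 1/u"
  proof
    assume "u = 1/u"
    then have uu: "u*u = 1" using u0 by (simp add: field_simps)
    have e: "(u-1)*(u+1) = u*u - 1" by (simp add: algebra_simps)
    have "(u-1)*(u+1) = 0" unfolding e uu by simp
    then show False using f6 by simp
  qed
  have l2: "u \<noteq> 1-u" using f4 by (auto simp add: field_simps algebra_simps)
  have l3: "u \<noteq> 1/(1-u)" using f1 u0 u1 by (auto simp add: field_simps algebra_simps power2_eq_square)
  have l4: "u \<noteq> (u-1)/u" using f1 u0 u1 by (auto simp add: field_simps algebra_simps power2_eq_square)
  have l5: "u \<noteq> u/(u-1)" using f5 u0 u1 by (auto simp add: field_simps algebra_simps power2_eq_square)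
  have l6: "1/u \<noteq> 1-u" using f1 u0 u1 by (auto simp add: field_simps algebra_simps power2_eq_square)
  have l7: "1/u \<noteq> 1/(1-u)" using f4 u0 u1 by (auto simp add: field_simps algebra_simps power2_eq_square)
  have l8: "1/u \<noteq> (u-1)/u" using f3 u0 u1 by (auto simp add: field_simps algebra_simps power2_eq_square)
  have l9: "1/u \<noteq> u/(u-1)" using f1 u0 u1 by (auto simp add: field_simps algebra_simps power2_eq_square)
  have l10: "1-u \<noteq> 1/(1-u)" using f5 u0 u1 by (auto simp add: field_simps algebra_simps power2_eq_square)
  have l11: "1-u \<noteq> (u-1)/u"
  proof
    assume "1-u = (u-1)/u"
    then have "(u-1)*(u+1) = 0" using u0 by (simp add: field_simps algebra_simps power2_eq_square)
    then show False using f6 by simp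
  qed
  have l12: "1-u \<noteq> u/(u-1)" using f1 u0 u1 by (auto simp add: field_simps algebra_simps power2_eq_square)
  have l13: "1/(1-u) \<noteq> (u-1)/u" using f1 u0 u1 by (auto simp add: field_simps algebra_simps power2_eq_square)
  have l14: "1/(1-u) \<noteq> u/(u-1)"
  proof
    assume "1/(1-u) = u/(u-1)"
    then have uu: "u*u = 1" using u0 u1 by (auto simp: field_simps algebra_simps)
    have e: "(u-1)*(u+1) = u*u - 1" by (simp add: algebra_simps)
    have "(u-1)*(u+1) = 0" unfolding e uu by simp
    then show False using f6 by simp
  qed
  have l15: "(u-1)/u \<noteq> u/(u-1)" using f4 u0 u1 by (auto simp add: field_simps algebra_simps power2_eq_square)
  show ?thesis unfolding Lst_def
    using l1 l2 l3 l4 l5 l6 l7 l8 l9 l10 l11 l12 l13 l14 l15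
    by (simp only: list.map fst_conv distinct.simps list.set insert_iff empty_iff) blast
qed



lemma chi2_pos: "chi2 w = 1 \<longleftrightarrow> w \<noteq> 0 \<and> sq w" unfolding chi2_def sq_def by auto
lemma chi2_neg: "chi2 w = -1 \<longleftrightarrow> w \<noteq> 0 \<and> \<not> sq w" unfolding chi2_def sq_def by auto
lemma chi2_vals: "w \<noteq> 0 \<Longrightarrow> chi2 w = 1 \<or> chi2 w = -1" unfolding chi2_def by auto

lemma gen_card:
  fixes u :: "'a::{field,finite}"
  assumes ch: "CHAR('a) \<ge> 3" and u0: "u \<noteq> 0" and u1: "u \<noteq> 1" and nb: "u \<notin> badset"
  shows "card (iso_set_L u) = length (filter snd (Lst u))"
  using iso_set_list[OF two_ne0[OF ch] u0 u1] card_list[OF gen_distinct[OF u0 u1 nb]] by simp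

theorem mainTheorem2:
  fixes u :: "'a::{field, finite}"
  assumes "CHAR('a) \<ge> 3"
    and "u \<noteq> 0" and "u \<noteq> 1"
  shows
   "(u = -1 \<and> CHAR('a) = 3 \<longrightarrow> card (iso_set_L u) = 1) \<and>
    (u \<in> {-1, 2, inverse 2} \<and> CARD('a) mod 8 \<in> {1, 3, 7} \<and> CHAR('a) > 3
       \<longrightarrow> card (iso_set_L u) = 3) \<and>
    (u \<in> {-1, 2} \<and> CARD('a) mod 8 = 5 \<longrightarrow> card (iso_set_L u) = 2) \<and>
    (u = inverse 2 \<and> CARD('a) mod 8 = 5 \<longrightarrow> card (iso_set_L u) = 1) \<and>
    (u^2 - u + 1 = 0 \<and> CARD('a) mod 12 = 1 \<and> CHAR('a) > 3 \<longrightarrow> card (iso_set_L u) = 2) \<and>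
    (u^2 - u + 1 = 0 \<and> CARD('a) mod 12 \<noteq> 1 \<longrightarrow> card (iso_set_L u) = 1) \<and>
    (chi2 (-1 :: 'a) = -1 \<and> u \<notin> badset \<longrightarrow> card (iso_set_L u) = 3) \<and>
    (chi2 (-1 :: 'a) = 1 \<and> chi2 u = -1 \<and> chi2 (1 - u) = -1 \<and> u \<notin> badset
       \<longrightarrow> card (iso_set_L u) = 2) \<and>
    (chi2 (-1 :: 'a) = 1 \<and> chi2 u * chi2 (1 - u) = -1 \<and> u \<notin> badset
       \<longrightarrow> card (iso_set_L u) = 4) \<and>
    (chi2 (-1 :: 'a) = 1 \<and> chi2 u = 1 \<and> chi2 (1 - u) = 1 \<and> u \<notin> badset
       \<longrightarrow> card (iso_set_L u) = 6)"
proof -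
  note ch = assms(1) and u0 = assms(2) and u1 = assms(3)
  have two: "(2::'a) \<noteq> 0" by (rule two_ne0[OF ch])
  have u1': "u - 1 \<noteq> 0" "1 - u \<noteq> 0" using u1 by auto
  have ch3: "CHAR('a) > 3 \<Longrightarrow> (3::'a) \<noteq> 0" using three_ne0[OF ch] by simp
  have no3: "CHAR('a) \<noteq> 3" if "CARD('a) mod 8 = 5"
  proof
    assume c3: "CHAR('a) = 3"
    have m21: "(-2::'a) = 1"
    proof -
      have "(-2::'a) - 1 = - 3" by simp
      also have "\<dots> = 0" using three_eq0[OF c3] by simp
      finally show ?thesis by simp
    qed
    have "sq (-2::'a)" unfolding m21 by (rule sq_one)
    then show False using sq_two_or[OF ch] that by blast
  qed
  have c1: "u = -1 \<and> CHAR('a) = 3 \<longrightarrow> card (iso_set_L u) = 1"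
    using case1 by blast
  have c234: "(u \<in> {-1, 2, inverse 2} \<and> CARD('a) mod 8 \<in> {1, 3, 7} \<and> CHAR('a) > 3
       \<longrightarrow> card (iso_set_L u) = 3) \<and>
    (u \<in> {-1, 2} \<and> CARD('a) mod 8 = 5 \<longrightarrow> card (iso_set_L u) = 2) \<and>
    (u = inverse 2 \<and> CARD('a) mod 8 = 5 \<longrightarrow> card (iso_set_L u) = 1)"
  proof (intro conjI impI; elim conjE)
    assume u: "u \<in> {-1, 2, inverse 2}" and q: "CARD('a) mod 8 \<in> {1, 3, 7}" and c: "CHAR('a) > 3"
    have t: "(3::'a) \<noteq> 0" using ch3 c by simp
    have "sq (2::'a) \<or> sq (-2::'a)" using sq_two_or[OF ch] q by auto
    then have "iso_set_L u = {-1, 2, 1/2}" using trio[OF ch t u] by simp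
    then show "card (iso_set_L u) = 3" using trio_ne[OF ch t] by simp
  next
    assume u: "u \<in> {-1, 2}" and q: "CARD('a) mod 8 = 5"
    have t: "(3::'a) \<noteq> 0" using ch3 no3[OF q] ch by simp
    have "\<not> (sq (2::'a) \<or> sq (-2::'a))" using sq_two_or[OF ch] q by auto
    moreover have "u \<noteq> 1/2" using u trio_ne[OF ch t] by auto
    ultimately have "iso_set_L u = {-1, 2}" using trio[OF ch t] u by simp
    then show "card (iso_set_L u) = 2" using trio_ne[OF ch t] by simp
  next
    assume u: "u = inverse 2" and q: "CARD('a) mod 8 = 5"
    have t: "(3::'a) \<noteq> 0" using ch3 no3[OF q] ch by simp
    have "\<not> (sq (2::'a) \<or> sq (-2::'a))" using sq_two_or[OF ch] q by auto
    moreover have "u = 1/2" using u by (simp add: inverse_eq_divide)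
    ultimately have "iso_set_L u = {1/2}" using trio[OF ch t] u by simp
    then show "card (iso_set_L u) = 1" by simp
  qed
  have c56: "(u^2 - u + 1 = 0 \<and> CARD('a) mod 12 = 1 \<and> CHAR('a) > 3 \<longrightarrow> card (iso_set_L u) = 2) \<and>
    (u^2 - u + 1 = 0 \<and> CARD('a) mod 12 \<noteq> 1 \<longrightarrow> card (iso_set_L u) = 1)"
  proof (intro conjI impI; elim conjE)
    assume h: "u^2 - u + 1 = 0" and q: "CARD('a) mod 12 = 1" and c: "CHAR('a) > 3"
    have t: "(3::'a) \<noteq> 0" using ch3 c by simp
    have "CARD('a) mod 4 = 1" using q by presburger
    then have "sq (-1::'a)" using sq_neg1[OF ch] by simp
    then have S: "iso_set_L u = {u, 1-u}" using hex_set[OF ch h] by simp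
    have "u \<noteq> 1 - u"
    proof
      assume "u = 1 - u"
      then have "2*u = 1" by (simp add: algebra_simps)
      then have "4*(u^2 - u + 1) = 3"
      proof -
        assume a: "2*u = 1"
        have "4*(u^2 - u + 1) = (2*u)^2 - 2*(2*u) + 4" by (simp add: power2_eq_square algebra_simps)
        also have "\<dots> = 3" unfolding a by simp
        finally show ?thesis .
      qed
      then show False using h t by simp
    qed
    then show "card (iso_set_L u) = 2" using S by simp
  next
    assume h: "u^2 - u + 1 = 0" and q: "CARD('a) mod 12 \<noteq> 1"
    show "card (iso_set_L u) = 1"
    proof (cases "CHAR('a) = 3")
      case True
      have t0: "(3::'a) = 0" by (rule three_eq0[OF True])
      have "(u+1)^2 = (u^2 - u + 1) + 3*u" by (simp add: power2_eq_square algebra_simps)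
      then have "(u+1)^2 = 0" using h t0 by simp
      then have um: "u = -1" by (simp add: eq_neg_iff_add_eq_0)
      have "(2::'a) + 1 = 3" by simp
      then have "(2::'a) + 1 = 0" using t0 by simp
      then have "(2::'a) = -1" by (simp add: eq_neg_iff_add_eq_0)
      then have "1 - u = u" using um by simp
      then have "iso_set_L u = {u}" using hex_set[OF ch h] by simp
      then show ?thesis by simp
    next
      case False
      have t: "(3::'a) \<noteq> 0" using ch3 False ch by simp
      have "\<not> sq u \<and> \<not> sq (-1::'a)" by (rule hex_nonsq[OF ch t h q])
      then have "iso_set_L u = {u}" using hex_set[OF ch h] by simp
      then show ?thesis by simp
    qed
  qed
  have c7: "chi2 (-1 :: 'a) = -1 \<and> u \<notin> badset \<longrightarrow> card (iso_set_L u) = 3"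
  proof (intro impI, elim conjE)
    assume m: "chi2 (-1 :: 'a) = -1" and nb: "u \<notin> badset"
    have n: "\<not> sq (-1::'a)" using m chi2_neg by auto
    have a: "sq (-u) \<longleftrightarrow> \<not> sq u" using sq_mult[OF ch _ u0, of "-1"] n by simp
    have b: "sq (1-u) \<longleftrightarrow> \<not> sq (u-1)" using sq_mult[OF ch _ u1'(1), of "-1"] n by simp
    show "card (iso_set_L u) = 3" unfolding gen_card[OF ch u0 u1 nb] Lst_def
      using n a b by (cases "sq u"; cases "sq (u-1)") simp_all
  qed
  have c8910: "(chi2 (-1 :: 'a) = 1 \<and> chi2 u = -1 \<and> chi2 (1 - u) = -1 \<and> u \<notin> badset
       \<longrightarrow> card (iso_set_L u) = 2) \<and>
    (chi2 (-1 :: 'a) = 1 \<and> chi2 u * chi2 (1 - u) = -1 \<and> u \<notin> badset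
       \<longrightarrow> card (iso_set_L u) = 4) \<and>
    (chi2 (-1 :: 'a) = 1 \<and> chi2 u = 1 \<and> chi2 (1 - u) = 1 \<and> u \<notin> badset
       \<longrightarrow> card (iso_set_L u) = 6)"
  proof -
    have key: "card (iso_set_L u) = 2 + (if sq u then 2 else 0) + (if sq (1-u) then 2 else 0)"
      if m: "chi2 (-1 :: 'a) = 1" and nb: "u \<notin> badset"
    proof -
      have n: "sq (-1::'a)" using m chi2_pos by auto
      have a: "sq (-u) \<longleftrightarrow> sq u" using sq_mult[OF ch _ u0, of "-1"] n by simp
      have b: "sq (u-1) \<longleftrightarrow> sq (1-u)" using sq_mult[OF ch _ u1'(1), of "-1"] n by simp
      show ?thesis unfolding gen_card[OF ch u0 u1 nb] Lst_def
        using n a b by (cases "sq u"; cases "sq (1-u)") simp_all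
    qed
    have cu: "chi2 u = 1 \<or> chi2 u = -1" using chi2_vals[OF u0] .
    have cv: "chi2 (1-u) = 1 \<or> chi2 (1-u) = -1" using chi2_vals[OF u1'(2)] .
    show ?thesis
    proof (intro conjI impI; elim conjE)
      assume m: "chi2 (-1 :: 'a) = 1" and a: "chi2 u = -1" and b: "chi2 (1 - u) = -1" and nb: "u \<notin> badset"
      have "\<not> sq u" "\<not> sq (1-u)" using a b chi2_neg[of u] chi2_neg[of "1-u"] by simp_all
      then show "card (iso_set_L u) = 2" using key[OF m nb] by simp
    next
      assume m: "chi2 (-1 :: 'a) = 1" and p: "chi2 u * chi2 (1 - u) = -1" and nb: "u \<notin> badset"
      have "(sq u \<and> \<not> sq (1-u)) \<or> (\<not> sq u \<and> sq (1-u))"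
        using cu cv p chi2_pos chi2_neg by (elim disjE) auto
      then show "card (iso_set_L u) = 4" using key[OF m nb] by auto
    next
      assume m: "chi2 (-1 :: 'a) = 1" and a: "chi2 u = 1" and b: "chi2 (1 - u) = 1" and nb: "u \<notin> badset"
      have "sq u" "sq (1-u)" using a b chi2_pos[of u] chi2_pos[of "1-u"] by simp_all
      then show "card (iso_set_L u) = 6" using key[OF m nb] by simp
    qed
  qed
  show ?thesis using c1 c234 c56 c7 c8910 by blast
qed


end
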